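(* Let $c\in[0,1)$, $b(c)=\tfrac12-c$, $f_c(x)=\log|\cos\pi(x+c)|$, and suppose $\chi_-(f_c,T(b(c)))>-\infty$. Then there is a constant $K>0$ such that for every $x\in\mathbb T$, either $T^n(x)=b(c)$ for some $n\ge0$, or $\chi_+(f_c,x)>-K$. Consequently $\alpha(c):=\inf_{\mu\in\mathcal M_T}\int f_c\,d\mu\ge -K$.
   Context: $\mathbb T=\mathbb R/\mathbb Z$, $Tx=2x\bmod1$, $\mathcal M_T$ the set of $T$-invariant Borel probability measures. $\chi_-(f_c,x)=\liminf_{n\to\infty}\frac1n\sum_{i=0}^{n-1}f_c(T^ix)$ and $\chi_+(f_c,x)=\limsup_{n\to\infty}\frac1n\sum_{i=0}^{n-1}f_c(T^ix)$. Convention $\log0=-\infty$. *)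

theory Defs
  imports "HOL-Probability.Probability"
begin

text \<open>The circle R/Z is represented by the fundamental domain [0,1).\<close>

definition doubling :: "real \<Rightarrow> real" where
  "doubling x = frac (2 * x)"

definition bpt :: "real \<Rightarrow> real" where
  "bpt c = frac (1/2 - c)"

definition fc :: "real \<Rightarrow> real \<Rightarrow> ereal" where
  "fc c x = (if cos (pi * (x + c)) = 0 then -\<infinity> else ereal (ln \<bar>cos (pi * (x + c))\<bar>))"

definition birkhoff_avg :: "real \<Rightarrow> real \<Rightarrow> nat \<Rightarrow> ereal" where
  "birkhoff_avg c x n = ereal (1 / real n) * (\<Sum>i<n. fc c ((doubling ^^ i) x))"

definition chi_minus :: "real \<Rightarrow> real \<Rightarrow> ereal" where
  "chi_minus c x = liminf (birkhoff_avg c x)"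

definition chi_plus :: "real \<Rightarrow> real \<Rightarrow> ereal" where
  "chi_plus c x = limsup (birkhoff_avg c x)"

definition invariant_measures :: "real measure set" where
  "invariant_measures = {M. sets M = sets (restrict_space borel {0..<1}) \<and> prob_space M
      \<and> doubling \<in> M \<rightarrow>\<^sub>M M \<and> distr M M doubling = M}"

text \<open>Integral of the nonpositive function f_c (value in [-infinity,0]).\<close>
definition int_fc :: "real \<Rightarrow> real measure \<Rightarrow> ereal" where
  "int_fc c M = - enn2ereal (\<integral>\<^sup>+ x. e2ennreal (- fc c x) \<partial>M)"

definition alpha :: "real \<Rightarrow> ereal" where
  "alpha c = (INF M\<in>invariant_measures. int_fc c M)"

end

theory Submission
  imports Defs
begin

definition Dd :: "real \<Rightarrow> real \<Rightarrow> real" where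
  "Dd c y = \<bar>cos (pi * (y + c))\<bar>"

definition gg :: "real \<Rightarrow> real \<Rightarrow> real" where
  "gg c y = - ln (Dd c y)"

definition gM :: "real \<Rightarrow> real \<Rightarrow> real \<Rightarrow> real" where
  "gM c M y = (if Dd c y = 0 then M else min (gg c y) M)"

lemma fc_alt: "fc c y = (if Dd c y = 0 then -\<infinity> else ereal (- gg c y))"
  by (simp add: fc_def Dd_def gg_def)

lemma Dd_le1: "Dd c y \<le> 1"
  by (simp add: Dd_def abs_cos_le_one)

lemma Dd_nonneg: "0 \<le> Dd c y"
  by (simp add: Dd_def)

lemma gg_nonneg: "0 < Dd c y \<Longrightarrow> 0 \<le> gg c y"
  using Dd_le1[of c y] by (simp add: gg_def)

lemma Dd_exp: "0 < Dd c y \<Longrightarrow> Dd c y = exp (- gg c y)"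
  by (simp add: gg_def)

lemma gM_le: "0 < Dd c y \<Longrightarrow> gM c M y \<le> gg c y"
  by (simp add: gM_def)

lemma gM_leM: "gM c M y \<le> M"
  by (simp add: gM_def)

lemma gM_nonneg: "0 \<le> M \<Longrightarrow> 0 \<le> gM c M y"
  using gg_nonneg[of c y] Dd_nonneg[of c y] by (auto simp: gM_def)

lemma doubling_funpow: "\<exists>k::int. (doubling ^^ j) y = 2 ^ j * y - of_int k"
proof (induction j)
  case 0
  then show ?case by (rule exI[of _ 0]) simp
next
  case (Suc j)
  then obtain k :: int where k: "(doubling ^^ j) y = 2 ^ j * y - of_int k" by blast
  have "(doubling ^^ Suc j) y = 2 * (2 ^ j * y - of_int k) - of_int \<lfloor>2 * (2 ^ j * y - of_int k)\<rfloor>"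
    by (simp add: k doubling_def frac_def)
  also have "\<dots> = 2 ^ Suc j * y - of_int (2 * k + \<lfloor>2 * (2 ^ j * y - of_int k)\<rfloor>)"
    by (simp add: algebra_simps)
  finally show ?case by blast
qed

lemma doubling_range: "0 \<le> doubling y \<and> doubling y < 1"
  by (simp add: doubling_def frac_lt_1)

lemma funpow_range: "0 \<le> x \<Longrightarrow> x < 1 \<Longrightarrow> 0 \<le> (doubling ^^ n) x \<and> (doubling ^^ n) x < 1"
  by (cases n) (auto simp: doubling_range)

lemma doubling_int_shift: "doubling (y + of_int k) = doubling y"
proof -
  have "2 * (y + of_int k) = 2 * y + of_int (2 * k)" by (simp add: algebra_simps)
  then show ?thesis by (simp only: doubling_def frac_add_of_int_right)
qed

lemma cos_shift_int: "\<bar>cos (x + pi * of_int k)\<bar> = \<bar>cos x\<bar>"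
proof -
  have s: "sin (pi * of_int k) = 0"
    using sin_times_pi_eq_0[of "of_int k"] by (simp add: mult.commute)
  have "(sin (pi * of_int k))\<^sup>2 + (cos (pi * of_int k))\<^sup>2 = 1" by (rule sin_cos_squared_add)
  then have "(cos (pi * of_int k))\<^sup>2 = 1" using s by simp
  then have c: "\<bar>cos (pi * of_int k)\<bar> = 1"
    by (metis abs_power2 power2_eq_1_iff abs_of_nonneg abs_ge_zero abs_minus_cancel abs_one)
  have "cos (x + pi * of_int k) = cos x * cos (pi * of_int k)" by (simp add: cos_add s)
  then show ?thesis by (simp add: abs_mult c)
qed

lemma Dd_shift: "Dd c (y + of_int k) = Dd c y"
proof -
  have "pi * (y + of_int k + c) = pi * (y + c) + pi * of_int k" by (simp add: algebra_simps)
  then show ?thesis by (simp add: Dd_def cos_shift_int)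
qed

lemma Dd_sin:
  assumes "y = bpt c + t + of_int k"
  shows "Dd c y = \<bar>sin (pi * t)\<bar>"
proof -
  have h: "y + c = 1/2 + t + of_int (k - \<lfloor>1/2 - c\<rfloor>)"
    using assms by (simp add: bpt_def frac_def)
  have "pi * (y + c) = (pi / 2 + pi * t) + pi * of_int (k - \<lfloor>1/2 - c\<rfloor>)"
    unfolding h by (simp add: algebra_simps)
  then have "Dd c y = \<bar>cos ((pi / 2 + pi * t) + pi * of_int (k - \<lfloor>1/2 - c\<rfloor>))\<bar>" by (simp only: Dd_def)
  also have "\<dots> = \<bar>cos (pi / 2 + pi * t)\<bar>" by (rule cos_shift_int)
  also have "\<dots> = \<bar>sin (pi * t)\<bar>" by (simp add: cos_add)
  finally show ?thesis .
qed

lemma Dd_zero: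
  assumes "Dd c z = 0"
  shows "\<exists>k::int. z = bpt c + of_int k"
proof -
  have "cos (pi * (z + c)) = 0" using assms by (simp add: Dd_def)
  then obtain i :: int where i: "odd i" "pi * (z + c) = of_int i * (pi / 2)"
    using cos_zero_iff_int by blast
  obtain j where j: "i = 2 * j + 1" using i(1) by (metis oddE)
  have "pi * (2 * (z + c)) = pi * of_int i" using i(2) by (simp add: algebra_simps)
  then have "2 * (z + c) = of_int i" using pi_neq_zero by simp
  then have "z + c = of_int i / 2" by simp
  then have "z = bpt c + of_int (j + \<lfloor>1/2 - c\<rfloor>)"
    by (simp add: j bpt_def frac_def field_simps)
  then show ?thesis by blast
qed

lemma Dd_zero_doubling: "Dd c z = 0 \<Longrightarrow> doubling z = doubling (bpt c)"
  using Dd_zero doubling_int_shift by metis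

lemma Dd_zero_unit:
  assumes "Dd c z = 0" "0 \<le> z" "z < 1"
  shows "z = bpt c"
proof -
  obtain k :: int where k: "z = bpt c + of_int k" using Dd_zero assms(1) by blast
  have "0 \<le> bpt c" "bpt c < 1" by (auto simp: bpt_def frac_lt_1)
  then have "k = 0" using k assms(2,3) by linarith
  then show ?thesis using k by simp
qed

lemma orbit_rel:
  assumes "y = bpt c + t + of_int k"
  shows "\<exists>k'::int. (doubling ^^ j) y = (doubling ^^ j) (bpt c) + 2 ^ j * t + of_int k'"
proof -
  obtain k1 :: int where k1: "(doubling ^^ j) y = 2 ^ j * y - of_int k1" using doubling_funpow by blast
  obtain k2 :: int where k2: "(doubling ^^ j) (bpt c) = 2 ^ j * bpt c - of_int k2" using doubling_funpow by blast
  have yy: "2 ^ j * y = 2 ^ j * bpt c + 2 ^ j * t + 2 ^ j * of_int k"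
    using assms by (simp add: algebra_simps)
  have "(doubling ^^ j) y = (doubling ^^ j) (bpt c) + 2 ^ j * t + of_int (2 ^ j * k - k1 + k2)"
    unfolding k1 k2 using yy by (simp add: algebra_simps)
  then show ?thesis by blast
qed

lemma Dd_orbit_ge:
  assumes "y = bpt c + t + of_int k"
  shows "Dd c ((doubling ^^ j) (bpt c)) \<le> Dd c ((doubling ^^ j) y) + \<bar>sin (pi * (2 ^ j * t))\<bar>"
proof -
  obtain k' :: int where k': "(doubling ^^ j) y = (doubling ^^ j) (bpt c) + 2 ^ j * t + of_int k'"
    using orbit_rel[OF assms] by blast
  define u where "u = (doubling ^^ j) (bpt c)"
  define s where "s = 2 ^ j * t"
  have e: "Dd c ((doubling ^^ j) y) = \<bar>cos (pi * (u + s + c))\<bar>"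
    using Dd_shift[of c "u + s" k'] by (simp add: k' u_def s_def Dd_def)
  have "cos (pi * (u + c)) = cos (pi * (u + s + c) - pi * s)" by (simp add: algebra_simps)
  also have "\<dots> = cos (pi * (u + s + c)) * cos (pi * s) + sin (pi * (u + s + c)) * sin (pi * s)"
    by (rule cos_diff)
  finally have "\<bar>cos (pi * (u + c))\<bar> \<le> \<bar>cos (pi * (u + s + c))\<bar> * \<bar>cos (pi * s)\<bar> + \<bar>sin (pi * (u + s + c))\<bar> * \<bar>sin (pi * s)\<bar>"
    by (simp add: abs_mult[symmetric] abs_triangle_ineq)
  also have "\<dots> \<le> \<bar>cos (pi * (u + s + c))\<bar> * 1 + 1 * \<bar>sin (pi * s)\<bar>"
    by (intro add_mono mult_left_mono mult_right_mono abs_cos_le_one abs_sin_le_one) auto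
  finally have X: "\<bar>cos (pi * (u + c))\<bar> \<le> \<bar>cos (pi * (u + s + c))\<bar> + \<bar>sin (pi * s)\<bar>" by simp
  have "Dd c u = \<bar>cos (pi * (u + c))\<bar>" by (simp add: Dd_def)
  then show ?thesis using X e unfolding u_def s_def by linarith
qed

lemma sin_key: fixes x :: real assumes "0 \<le> x" "x \<le> 2" shows "x / 3 \<le> sin x"
proof -
    have "\<bar>sin x - (\<Sum>m<3. sin_coeff m * x ^ m)\<bar> \<le> inverse (fact 3) * \<bar>x\<bar> ^ 3"
      by (rule Maclaurin_sin_bound)
    moreover have "(\<Sum>m<3. sin_coeff m * x ^ m) = x"
      by (simp add: sin_coeff_def numeral_3_eq_3 eval_nat_numeral)
    ultimately have h: "\<bar>sin x - x\<bar> * 6 \<le> x^3" using assms by (simp add: fact_numeral)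
    have "x - sin x \<le> x^3/6" using h abs_ge_minus_self[of "sin x - x"] by (simp add: field_simps)
    moreover have "x*x \<le> 2*2" using mult_mono[of x 2 x 2] assms by simp
    then have "x*x*x \<le> 4*x" using mult_right_mono[of "x*x" 4 x] assms by simp
    then have "x^3 \<le> 4*x" by (simp add: power3_eq_cube)
    ultimately show ?thesis by linarith
qed

lemma sin_lower: fixes t :: real assumes "\<bar>t\<bar> \<le> 1/2" shows "\<bar>t\<bar> \<le> \<bar>sin (pi * t)\<bar>"
proof -
  have p: "3 < pi" "pi < 4" using pi_gt3 pi_less_4 by auto
  have a0: "0 \<le> pi * \<bar>t\<bar>" by simp
  have a1: "pi * \<bar>t\<bar> \<le> 4 * (1/2)" using mult_mono[of pi 4 "\<bar>t\<bar>" "1/2"] p assms by simp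
  have "pi * \<bar>t\<bar> / 3 \<le> sin (pi * \<bar>t\<bar>)" using sin_key[OF a0] a1 by simp
  moreover have "3 * \<bar>t\<bar> \<le> pi * \<bar>t\<bar>" using mult_right_mono[of 3 pi "\<bar>t\<bar>"] p by simp
  moreover have "\<bar>sin (pi * t)\<bar> = \<bar>sin (pi * \<bar>t\<bar>)\<bar>" by (cases "t \<ge> 0") auto
  ultimately show ?thesis by linarith
qed

lemma sum_split_add: fixes m k :: nat shows "(\<Sum>i<m + k. f i) = (\<Sum>i<m. f i) + (\<Sum>i<k. f (i + m))"
  by (induction k) (simp_all add: add_ac)

lemma gM_borel: "gM c M \<in> borel_measurable borel"
  unfolding gM_def gg_def Dd_def by measurable

lemma gM_meas:
  assumes "sets \<mu> = sets (restrict_space borel {0..<1::real})"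
  shows "gM c M \<in> borel_measurable \<mu>"
proof -
  have "gM c M \<in> borel_measurable (restrict_space borel {0..<1::real})"
    by (rule measurable_restrict_space1[OF gM_borel])
  then show ?thesis using measurable_cong_sets[OF assms refl[of "sets (borel::real measure)"]] by simp
qed

lemma invariant_int:
  assumes Tm: "doubling \<in> \<mu> \<rightarrow>\<^sub>M \<mu>" and dis: "distr \<mu> \<mu> doubling = \<mu>"
    and F: "F \<in> borel_measurable \<mu>"
  shows "(\<integral>\<^sup>+y. F ((doubling ^^ i) y) \<partial>\<mu>) = (\<integral>\<^sup>+y. F y \<partial>\<mu>)"
proof (induction i)
  case 0 then show ?case by simp
next
  case (Suc i)
  have Fi: "(\<lambda>y. F ((doubling ^^ i) y)) \<in> borel_measurable \<mu>"
    using measurable_compose[OF measurable_compose_n[OF Tm] F] by (simp add: comp_def)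
  have "(\<integral>\<^sup>+y. F ((doubling ^^ Suc i) y) \<partial>\<mu>) = (\<integral>\<^sup>+y. F ((doubling ^^ i) (doubling y)) \<partial>\<mu>)"
    by (simp only: funpow_Suc_right comp_apply)
  also have "\<dots> = (\<integral>\<^sup>+y. F ((doubling ^^ i) y) \<partial>distr \<mu> \<mu> doubling)"
    using Fi dis by (intro nn_integral_distr[OF Tm, symmetric]) simp
  also have "\<dots> = (\<integral>\<^sup>+y. F y \<partial>\<mu>)" using Suc dis by simp
  finally show ?case .
qed

definition K0 :: "real \<Rightarrow> real" where "K0 A = 2 * A + 2 * ln 2 + ln (2 * pi)"

context
  fixes c A :: real
  assumes A0: "0 \<le> A"
    and bpos: "\<And>j. 0 < Dd c ((doubling ^^ Suc j) (bpt c))"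
    and bsum: "\<And>n. (\<Sum>i<n. gg c ((doubling ^^ Suc i) (bpt c))) \<le> A * real n"
begin

lemma gb_le: "gg c ((doubling ^^ Suc j) (bpt c)) \<le> A * real (Suc j)"
proof -
  have "gg c ((doubling ^^ Suc j) (bpt c)) \<le> (\<Sum>i<Suc j. gg c ((doubling ^^ Suc i) (bpt c)))"
    by (rule member_le_sum) (auto simp del: funpow.simps intro: gg_nonneg bpos)
  also have "\<dots> \<le> A * real (Suc j)" by (rule bsum)
  finally show ?thesis .
qed

lemma block:
  assumes "0 < Dd c y"
  shows "\<exists>m\<ge>1. (\<forall>i. Suc i < m \<longrightarrow> Dd c ((doubling ^^ Suc i) (bpt c)) / 2 < Dd c ((doubling ^^ Suc i) y))
     \<and> gg c y \<le> (A + ln 2) * real m + ln (2 * pi)"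
proof -
  define b where "b = bpt c"
  define t where "t = (y - b) - of_int (round (y - b))"
  have tb: "\<bar>t\<bar> \<le> 1/2" using of_int_round_abs_le[of "y - b"] by (simp add: t_def abs_minus_commute)
  have yrep: "y = bpt c + t + of_int (round (y - b))" by (simp add: t_def b_def)
  have Dy: "Dd c y = \<bar>sin (pi * t)\<bar>" by (rule Dd_sin[OF yrep])
  have t0: "0 < \<bar>t\<bar>" using assms Dy by auto
  define P where "P j \<longleftrightarrow> Dd c ((doubling ^^ j) b) / (2 * pi) \<le> 2 ^ j * \<bar>t\<bar>" for j
  obtain n :: nat where n: "1 / (2 * pi * \<bar>t\<bar>) < 2 ^ n"
    using real_arch_pow[of 2 "1 / (2 * pi * \<bar>t\<bar>)"] by auto
  have "1 / (2 * pi) < 2 ^ n * \<bar>t\<bar>"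
    using n t0 by (simp add: field_simps)
  moreover have "Dd c ((doubling ^^ Suc n) b) / (2 * pi) \<le> 1 / (2 * pi)"
    using Dd_le1 by (simp add: divide_right_mono)
  moreover have "2 ^ n * \<bar>t\<bar> \<le> 2 ^ Suc n * \<bar>t\<bar>" using t0 by simp
  ultimately have "P (Suc n)" unfolding P_def by linarith
  then have ex: "\<exists>j. 1 \<le> j \<and> P j" by (intro exI[of _ "Suc n"] conjI) simp_all
  define m where "m = (LEAST j. 1 \<le> j \<and> P j)"
  have m1: "1 \<le> m \<and> P m" unfolding m_def by (rule LeastI_ex[OF ex])
  then have m1: "1 \<le> m" "P m" by simp_all
  have notP: "\<not> P j" if "1 \<le> j" "j < m" for j
  proof
    assume "P j"
    then have "m \<le> j" unfolding m_def using that(1) by (intro Least_le) simp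
    then show False using that(2) by simp
  qed
  have inter: "Dd c ((doubling ^^ Suc i) b) / 2 < Dd c ((doubling ^^ Suc i) y)" if "Suc i < m" for i
  proof -
    have "2 ^ Suc i * \<bar>t\<bar> < Dd c ((doubling ^^ Suc i) b) / (2 * pi)"
      using notP[of "Suc i"] that unfolding P_def by auto
    then have "pi * (2 ^ Suc i * \<bar>t\<bar>) < Dd c ((doubling ^^ Suc i) b) / 2"
      by (simp add: field_simps)
    moreover have "\<bar>sin (pi * (2 ^ Suc i * t))\<bar> \<le> pi * (2 ^ Suc i * \<bar>t\<bar>)"
      using abs_sin_x_le_abs_x[of "pi * (2 ^ Suc i * t)"] by (simp add: abs_mult)
    moreover have "Dd c ((doubling ^^ Suc i) b) \<le> Dd c ((doubling ^^ Suc i) y) + \<bar>sin (pi * (2 ^ Suc i * t))\<bar>"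
      unfolding b_def by (rule Dd_orbit_ge[OF yrep])
    ultimately show ?thesis by linarith
  qed
  obtain j where mj: "m = Suc j" using m1 by (cases m) auto
  have "exp (- (A * real m)) \<le> exp (- gg c ((doubling ^^ m) b))"
    using gb_le[of j] unfolding mj b_def by simp
  also have "\<dots> = Dd c ((doubling ^^ m) b)"
    using Dd_exp[OF bpos[of j]] unfolding mj b_def by simp
  finally have "exp (- (A * real m)) / (2 * pi) \<le> Dd c ((doubling ^^ m) b) / (2 * pi)"
    by (rule divide_right_mono) simp
  then have "exp (- (A * real m)) / (2 * pi) \<le> 2 ^ m * \<bar>t\<bar>"
    using m1(2) unfolding P_def by linarith
  then have "ln (exp (- (A * real m)) / (2 * pi)) \<le> ln (2 ^ m * \<bar>t\<bar>)"
    using t0 by (subst ln_le_cancel_iff) auto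
  then have L: "- (A * real m) - ln (2 * pi) \<le> real m * ln 2 + ln \<bar>t\<bar>"
    using t0 by (simp add: ln_div ln_mult ln_realpow)
  have "gg c y = - ln \<bar>sin (pi * t)\<bar>" by (simp add: gg_def Dy)
  also have "\<dots> \<le> - ln \<bar>t\<bar>" using sin_lower[OF tb] t0 by simp
  also have "\<dots> \<le> (A + ln 2) * real m + ln (2 * pi)" using L by (simp add: algebra_simps)
  finally show ?thesis using m1(1) inter unfolding b_def by blast
qed


lemma K0_ge: "A + ln 2 \<le> K0 A" "0 \<le> K0 A"
proof -
  have "0 < ln (2 * pi)" using pi_gt3 by (subst ln_gt_zero_iff) auto
  moreover have "0 < ln (2::real)" by simp
  ultimately show "A + ln 2 \<le> K0 A" "0 \<le> K0 A" using A0 by (auto simp: K0_def)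
qed

lemma block_sum:
  assumes "0 < Dd c y"
  obtains m where "1 \<le> m" "\<And>i. i < m \<Longrightarrow> 0 < Dd c ((doubling ^^ i) y)"
    "(\<Sum>i<m. gg c ((doubling ^^ i) y)) \<le> K0 A * real m"
    "\<And>r. Suc r \<le> m \<Longrightarrow> (\<Sum>i<r. gg c ((doubling ^^ Suc i) y)) \<le> (A + ln 2) * real r"
proof -
  obtain m where m1: "1 \<le> m"
    and inter: "\<And>i. Suc i < m \<Longrightarrow> Dd c ((doubling ^^ Suc i) (bpt c)) / 2 < Dd c ((doubling ^^ Suc i) y)"
    and gy: "gg c y \<le> (A + ln 2) * real m + ln (2 * pi)"
    using block[OF assms] by blast
  have pos: "0 < Dd c ((doubling ^^ i) y)" if "i < m" for i
  proof (cases i)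
    case 0 then show ?thesis using assms by simp
  next
    case (Suc i')
    have "0 < Dd c ((doubling ^^ Suc i') (bpt c)) / 2" using bpos[of i'] by simp
    then show ?thesis using inter[of i'] that unfolding Suc by linarith
  qed
  have hterm: "gg c ((doubling ^^ Suc i) y) \<le> gg c ((doubling ^^ Suc i) (bpt c)) + ln 2" if "Suc i < m" for i
  proof -
    have h: "0 < Dd c ((doubling ^^ Suc i) (bpt c)) / 2" using bpos[of i] by simp
    have "ln (Dd c ((doubling ^^ Suc i) (bpt c)) / 2) \<le> ln (Dd c ((doubling ^^ Suc i) y))"
      using inter[OF that] h by (subst ln_le_cancel_iff) auto
    then show ?thesis using bpos[of i] by (simp add: gg_def ln_div)
  qed
  have part: "(\<Sum>i<r. gg c ((doubling ^^ Suc i) y)) \<le> (A + ln 2) * real r" if "Suc r \<le> m" for r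
  proof -
    have "(\<Sum>i<r. gg c ((doubling ^^ Suc i) y)) \<le> (\<Sum>i<r. gg c ((doubling ^^ Suc i) (bpt c)) + ln 2)"
      by (rule sum_mono) (use hterm that in auto)
    also have "\<dots> = (\<Sum>i<r. gg c ((doubling ^^ Suc i) (bpt c))) + real r * ln 2"
      by (simp add: sum.distrib)
    also have "\<dots> \<le> A * real r + real r * ln 2" using bsum[of r] by simp
    finally show ?thesis by (simp add: algebra_simps)
  qed
  obtain m' where mm: "m = Suc m'" using m1 by (cases m) auto
  have "(\<Sum>i<m. gg c ((doubling ^^ i) y)) = gg c y + (\<Sum>i<m'. gg c ((doubling ^^ Suc i) y))"
    unfolding mm by (simp only: sum.lessThan_Suc_shift funpow_0)
  also have "\<dots> \<le> ((A + ln 2) * real m + ln (2 * pi)) + (A + ln 2) * real m'"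
    using gy part[of m'] mm by simp
  also have "\<dots> \<le> K0 A * real m"
  proof -
    have l: "0 < ln (2 * pi)" using pi_gt3 by (subst ln_gt_zero_iff) auto
    have x: "0 \<le> A + ln 2" using A0 by simp
    have "ln (2 * pi) \<le> ln (2 * pi) * real m" using l m1 by simp
    moreover have "(A + ln 2) * real m' \<le> (A + ln 2) * real m" using x mm by (simp add: mult_left_mono)
    ultimately show ?thesis unfolding K0_def by (simp add: algebra_simps)
  qed
  finally have S: "(\<Sum>i<m. gg c ((doubling ^^ i) y)) \<le> K0 A * real m" .
  show ?thesis by (rule that[OF m1 pos S part])
qed


lemma trunc_good:
  assumes M0: "0 \<le> M"
  shows "(\<forall>i<n. 0 < Dd c ((doubling ^^ i) y)) \<Longrightarrow> (\<Sum>i<n. gM c M ((doubling ^^ i) y)) \<le> K0 A * real n + M"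
proof (induction n arbitrary: y rule: less_induct)
  case (less n)
  show ?case
  proof (cases "n = 0")
    case True then show ?thesis using M0 by simp
  next
    case False
    then have "0 < n" by simp
    then have Dy: "0 < Dd c y" using less.prems[rule_format, of 0] by simp
    obtain m where m1: "1 \<le> m" and pos: "\<And>i. i < m \<Longrightarrow> 0 < Dd c ((doubling ^^ i) y)"
      and S: "(\<Sum>i<m. gg c ((doubling ^^ i) y)) \<le> K0 A * real m"
      and part: "\<And>r. Suc r \<le> m \<Longrightarrow> (\<Sum>i<r. gg c ((doubling ^^ Suc i) y)) \<le> (A + ln 2) * real r"
      using block_sum[OF Dy] by metis
    show ?thesis
    proof (cases "n \<le> m")
      case True
      obtain n' where nn: "n = Suc n'" using False by (cases n) auto
      have e: "(\<Sum>i<n. gM c M ((doubling ^^ i) y)) = gM c M y + (\<Sum>i<n'. gM c M ((doubling ^^ Suc i) y))"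
        unfolding nn by (simp only: sum.lessThan_Suc_shift funpow_0)
      have "(\<Sum>i<n'. gM c M ((doubling ^^ Suc i) y)) \<le> (\<Sum>i<n'. gg c ((doubling ^^ Suc i) y))"
      proof (rule sum_mono)
        fix i assume "i \<in> {..<n'}"
        then have "Suc i < n" using nn by simp
        then show "gM c M ((doubling ^^ Suc i) y) \<le> gg c ((doubling ^^ Suc i) y)"
          using less.prems[rule_format, of "Suc i"] by (intro gM_le) simp
      qed
      moreover have "(\<Sum>i<n'. gg c ((doubling ^^ Suc i) y)) \<le> (A + ln 2) * real n'"
        using part[of n'] True nn by simp
      moreover have "(A + ln 2) * real n' \<le> K0 A * real n'"
        using K0_ge(1) by (rule mult_right_mono) simp
      moreover have "K0 A * real n' \<le> K0 A * real n"
        using K0_ge(2) nn by (intro mult_left_mono) auto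
      moreover have "gM c M y \<le> M" by (rule gM_leM)
      ultimately show ?thesis using e by linarith
    next
      case False
      define k where "k = n - m"
      have nk: "n = m + k" and kn: "k < n" using False m1 by (simp_all add: k_def)
      have e: "(\<Sum>i<n. gM c M ((doubling ^^ i) y)) = (\<Sum>i<m. gM c M ((doubling ^^ i) y)) + (\<Sum>i<k. gM c M ((doubling ^^ (i + m)) y))"
        unfolding nk by (rule sum_split_add)
      have e2: "(\<Sum>i<k. gM c M ((doubling ^^ (i + m)) y)) = (\<Sum>i<k. gM c M ((doubling ^^ i) ((doubling ^^ m) y)))"
        by (simp only: funpow_add comp_apply)
      have "(\<Sum>i<m. gM c M ((doubling ^^ i) y)) \<le> (\<Sum>i<m. gg c ((doubling ^^ i) y))"
        by (intro sum_mono gM_le pos) simp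
      moreover have "(\<Sum>i<k. gM c M ((doubling ^^ i) ((doubling ^^ m) y))) \<le> K0 A * real k + M"
      proof (rule less.IH[OF kn], intro allI impI)
        fix i assume "i < k"
        then have "i + m < n" using nk by simp
        then have "0 < Dd c ((doubling ^^ (i + m)) y)" using less.prems[rule_format, of "i + m"] by simp
        then show "0 < Dd c ((doubling ^^ i) ((doubling ^^ m) y))" by (simp only: funpow_add comp_apply)
      qed
      moreover have "K0 A * real n = K0 A * real m + K0 A * real k" using nk by (simp add: algebra_simps)
      ultimately show ?thesis using e e2 S by linarith
    qed
  qed
qed

lemma trunc_all:
  assumes M0: "0 \<le> M"
  shows "(\<Sum>i<n. gM c M ((doubling ^^ i) y)) \<le> K0 A * real n + 3 * M"
proof (cases "\<forall>i<n. 0 < Dd c ((doubling ^^ i) y)")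
  case True then show ?thesis using trunc_good[OF M0 True] M0 by linarith
next
  case False
  then obtain i0 where i0: "i0 < n" "\<not> 0 < Dd c ((doubling ^^ i0) y)" by blast
  then have "Dd c ((doubling ^^ i0) y) = 0" using Dd_nonneg[of c "(doubling ^^ i0) y"] by linarith
  then have ex: "\<exists>i. i < n \<and> Dd c ((doubling ^^ i) y) = 0" using i0 by blast
  define p where "p = (LEAST i. i < n \<and> Dd c ((doubling ^^ i) y) = 0)"
  have p: "p < n \<and> Dd c ((doubling ^^ p) y) = 0" unfolding p_def by (rule LeastI_ex[OF ex])
  have before: "\<forall>i<p. 0 < Dd c ((doubling ^^ i) y)"
  proof (intro allI impI)
    fix i assume ip: "i < p"
    have "\<not> (i < n \<and> Dd c ((doubling ^^ i) y) = 0)"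
      using not_less_Least[of i "\<lambda>i. i < n \<and> Dd c ((doubling ^^ i) y) = 0"] ip unfolding p_def by blast
    then have "Dd c ((doubling ^^ i) y) \<noteq> 0" using ip p by simp
    then show "0 < Dd c ((doubling ^^ i) y)" using Dd_nonneg[of c "(doubling ^^ i) y"] by linarith
  qed
  define k where "k = n - Suc p"
  have nk: "n = Suc p + k" using p by (simp add: k_def)
  have e: "(\<Sum>i<n. gM c M ((doubling ^^ i) y)) = (\<Sum>i<Suc p. gM c M ((doubling ^^ i) y)) + (\<Sum>i<k. gM c M ((doubling ^^ (i + Suc p)) y))"
    unfolding nk by (rule sum_split_add)
  have e1: "(\<Sum>i<Suc p. gM c M ((doubling ^^ i) y)) = (\<Sum>i<p. gM c M ((doubling ^^ i) y)) + M"
    using p by (simp add: gM_def)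
  have dd: "(doubling ^^ Suc p) y = doubling (bpt c)"
    using Dd_zero_doubling[of c "(doubling ^^ p) y"] p by simp
  have e2: "(doubling ^^ (i + Suc p)) y = (doubling ^^ i) (doubling (bpt c))" for i
    by (simp only: funpow_add comp_apply dd)
  have tailpos: "\<forall>i<k. 0 < Dd c ((doubling ^^ i) (doubling (bpt c)))"
  proof (intro allI impI)
    fix i
    have "(doubling ^^ i) (doubling (bpt c)) = (doubling ^^ Suc i) (bpt c)"
      by (simp only: funpow_Suc_right comp_apply)
    then show "0 < Dd c ((doubling ^^ i) (doubling (bpt c)))" using bpos[of i] by (simp only:)
  qed
  have "(\<Sum>i<k. gM c M ((doubling ^^ i) (doubling (bpt c)))) \<le> K0 A * real k + M"
    by (rule trunc_good[OF M0 tailpos])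
  moreover have "(\<Sum>i<p. gM c M ((doubling ^^ i) y)) \<le> K0 A * real p + M"
    by (rule trunc_good[OF M0 before])
  moreover have "K0 A * real p + K0 A * real k \<le> K0 A * real n"
    using K0_ge(2) nk by (simp add: algebra_simps)
  moreover have "(\<Sum>i<k. gM c M ((doubling ^^ (i + Suc p)) y)) = (\<Sum>i<k. gM c M ((doubling ^^ i) (doubling (bpt c))))"
    by (simp only: e2)
  ultimately show ?thesis using e e1 by linarith
qed

lemma untrunc:
  assumes "\<forall>i. 0 < Dd c ((doubling ^^ i) x)"
  shows "\<exists>n\<ge>N. (\<Sum>i<n. gg c ((doubling ^^ i) x)) \<le> K0 A * real n"
proof (induction N)
  case 0
  show ?case by (rule exI[of _ 0]) simp
next
  case (Suc N)
  then obtain n where n: "N \<le> n" "(\<Sum>i<n. gg c ((doubling ^^ i) x)) \<le> K0 A * real n" by blast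
  have Dy: "0 < Dd c ((doubling ^^ n) x)" using assms by simp
  obtain m where m1: "1 \<le> m" and S: "(\<Sum>i<m. gg c ((doubling ^^ i) ((doubling ^^ n) x))) \<le> K0 A * real m"
    using block_sum[OF Dy] by metis
  have e1: "(\<Sum>i<n + m. gg c ((doubling ^^ i) x)) = (\<Sum>i<n. gg c ((doubling ^^ i) x)) + (\<Sum>i<m. gg c ((doubling ^^ (i + n)) x))"
    by (rule sum_split_add)
  have e2: "(\<Sum>i<m. gg c ((doubling ^^ (i + n)) x)) = (\<Sum>i<m. gg c ((doubling ^^ i) ((doubling ^^ n) x)))"
    by (simp only: funpow_add comp_apply)
  have "K0 A * real (n + m) = K0 A * real n + K0 A * real m" by (simp add: algebra_simps)
  then have "(\<Sum>i<n + m. gg c ((doubling ^^ i) x)) \<le> K0 A * real (n + m)"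
    using n(2) S e1 e2 by linarith
  moreover have "Suc N \<le> n + m" using n(1) m1 by simp
  ultimately show ?case by blast
qed


lemma int_bound:
  assumes inv: "\<mu> \<in> invariant_measures"
  shows "(\<integral>\<^sup>+y. e2ennreal (- fc c y) \<partial>\<mu>) \<le> ennreal (K0 A + 3)"
proof -
  have sets: "sets \<mu> = sets (restrict_space borel {0..<1})" and ps: "prob_space \<mu>"
    and Tm: "doubling \<in> \<mu> \<rightarrow>\<^sub>M \<mu>" and dis: "distr \<mu> \<mu> doubling = \<mu>"
    using inv by (auto simp: invariant_measures_def)
  have meas: "(\<lambda>y. ennreal (gM c M y)) \<in> borel_measurable \<mu>" for M
    using gM_meas[OF sets] by measurable
  have measi: "(\<lambda>y. ennreal (gM c M ((doubling ^^ i) y))) \<in> borel_measurable \<mu>" for M i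
    using measurable_compose[OF measurable_compose_n[OF Tm] meas[of M]] by (simp add: comp_def)
  have each: "(\<integral>\<^sup>+y. ennreal (gM c (real n) y) \<partial>\<mu>) \<le> ennreal (K0 A + 3)" if n1: "1 \<le> n" for n :: nat
  proof -
    define M where "M = real n"
    have M0: "0 \<le> M" by (simp add: M_def)
    define X where "X = (\<integral>\<^sup>+y. ennreal (gM c M y) \<partial>\<mu>)"
    have "(\<integral>\<^sup>+y. (\<Sum>i<n. ennreal (gM c M ((doubling ^^ i) y))) \<partial>\<mu>)
        = (\<Sum>i<n. \<integral>\<^sup>+y. ennreal (gM c M ((doubling ^^ i) y)) \<partial>\<mu>)"
      by (rule nn_integral_sum) (rule measi)
    also have "\<dots> = (\<Sum>i<n. X)"
      unfolding X_def by (intro sum.cong refl invariant_int[OF Tm dis meas])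
    also have "\<dots> = of_nat n * X" by simp
    finally have e: "(\<integral>\<^sup>+y. (\<Sum>i<n. ennreal (gM c M ((doubling ^^ i) y))) \<partial>\<mu>) = of_nat n * X" .
    have "(\<integral>\<^sup>+y. (\<Sum>i<n. ennreal (gM c M ((doubling ^^ i) y))) \<partial>\<mu>) \<le> (\<integral>\<^sup>+y. ennreal (K0 A * real n + 3 * M) \<partial>\<mu>)"
    proof (rule nn_integral_mono)
      fix y
      have "(\<Sum>i<n. ennreal (gM c M ((doubling ^^ i) y))) = ennreal (\<Sum>i<n. gM c M ((doubling ^^ i) y))"
        using gM_nonneg[OF M0] by (simp add: sum_ennreal)
      also have "\<dots> \<le> ennreal (K0 A * real n + 3 * M)"
        by (rule ennreal_leI) (rule trunc_all[OF M0])
      finally show "(\<Sum>i<n. ennreal (gM c M ((doubling ^^ i) y))) \<le> ennreal (K0 A * real n + 3 * M)" .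
    qed
    also have "\<dots> = ennreal (K0 A * real n + 3 * M)"
      using prob_space.emeasure_space_1[OF ps] by (simp add: nn_integral_const)
    also have "\<dots> = of_nat n * ennreal (K0 A + 3)"
    proof -
      have "K0 A * real n + 3 * M = real n * (K0 A + 3)" by (simp add: M_def algebra_simps)
      moreover have "ennreal (real n * (K0 A + 3)) = ennreal (real n) * ennreal (K0 A + 3)"
        using K0_ge(2) by (intro ennreal_mult) auto
      ultimately show ?thesis by (simp add: ennreal_of_nat_eq_real_of_nat)
    qed
    finally have "of_nat n * X \<le> of_nat n * ennreal (K0 A + 3)" using e by simp
    moreover have "(of_nat n :: ennreal) \<noteq> 0" "(of_nat n :: ennreal) \<noteq> top" using n1 by auto
    ultimately have "X \<le> ennreal (K0 A + 3)" using ennreal_mult_le_mult_iff by blast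
    then show ?thesis by (simp add: X_def M_def)
  qed
  have pw: "e2ennreal (- fc c y) = (SUP n. ennreal (gM c (real (Suc n)) y))" for y
  proof (cases "Dd c y = 0")
    case True
    have "(SUP n. (of_nat n :: ennreal)) \<le> (SUP n. of_nat (Suc n))"
    proof (rule SUP_mono)
      fix n :: nat
      show "\<exists>m\<in>UNIV. (of_nat n :: ennreal) \<le> of_nat (Suc m)" by (rule bexI[of _ n]) simp_all
    qed
    then have "(SUP n. (of_nat (Suc n) :: ennreal)) = top"
      using ennreal_SUP_of_nat_eq_top top.extremum_uniqueI by metis
    then have T: "(SUP n. (of_nat (Suc n) :: ennreal)) = top" .
    have "ennreal (gM c (real (Suc n)) y) = of_nat (Suc n)" for n
      using True ennreal_of_nat_eq_real_of_nat[of "Suc n"] by (simp only: gM_def if_True refl simp_thms)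
    then have "(SUP n. ennreal (gM c (real (Suc n)) y)) = top" using T by simp
    moreover have "e2ennreal (- fc c y) = top" using True by (simp add: fc_alt)
    ultimately show ?thesis by (simp only:)
  next
    case False
    then have Dp: "0 < Dd c y" using Dd_nonneg[of c y] by linarith
    have l: "e2ennreal (- fc c y) = ennreal (gg c y)" using False by (simp add: fc_alt)
    have r: "(SUP n. ennreal (gM c (real (Suc n)) y)) = ennreal (gg c y)"
    proof (rule antisym)
      show "(SUP n. ennreal (gM c (real (Suc n)) y)) \<le> ennreal (gg c y)"
        by (rule SUP_least) (use gM_le[OF Dp] in \<open>auto intro: ennreal_leI\<close>)
    next
      obtain n where "gg c y \<le> real n" using real_arch_simple by blast
      then have "gM c (real (Suc n)) y = gg c y" using False by (simp add: gM_def)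
      then show "ennreal (gg c y) \<le> (SUP n. ennreal (gM c (real (Suc n)) y))"
        by (intro SUP_upper2[of n]) auto
    qed
    show ?thesis using l r by simp
  qed
  have inc: "incseq (\<lambda>n y. ennreal (gM c (real (Suc n)) y))"
  proof (rule incseq_SucI, rule le_funI)
    fix n y
    show "ennreal (gM c (real (Suc n)) y) \<le> ennreal (gM c (real (Suc (Suc n))) y)"
      by (rule ennreal_leI) (auto simp: gM_def)
  qed
  have "(\<integral>\<^sup>+y. e2ennreal (- fc c y) \<partial>\<mu>) = (\<integral>\<^sup>+y. (SUP n. ennreal (gM c (real (Suc n)) y)) \<partial>\<mu>)"
    by (simp add: pw)
  also have "\<dots> = (SUP n. \<integral>\<^sup>+y. ennreal (gM c (real (Suc n)) y) \<partial>\<mu>)"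
    by (rule nn_integral_monotone_convergence_SUP[OF inc]) (rule meas)
  also have "\<dots> \<le> ennreal (K0 A + 3)"
    by (rule SUP_least) (rule each, simp)
  finally show ?thesis .
qed

end

lemma fc_le0: "fc c y \<le> 0"
proof (cases "Dd c y = 0")
  case False
  then have "0 < Dd c y" using Dd_nonneg[of c y] by linarith
  then show ?thesis using gg_nonneg[of c y] False by (simp add: fc_alt)
qed (simp add: fc_alt)

lemma orbit_shift: "(doubling ^^ i) (doubling z) = (doubling ^^ Suc i) z"
  by (simp only: funpow_Suc_right comp_apply)

theorem proposition2p3:
  fixes c :: real
  assumes "0 \<le> c" and "c < 1"
    and "chi_minus c (doubling (bpt c)) > -\<infinity>"
  shows "\<exists>K::real. K > 0 \<and>
     (\<forall>x\<in>{0..<1}. (\<exists>n. (doubling ^^ n) x = bpt c) \<or> chi_plus c x > - ereal K) \<and>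
     alpha c \<ge> - ereal K"
proof -
  define X where "X = birkhoff_avg c (doubling (bpt c))"
  have "-\<infinity> < liminf X" using assms(3) by (simp add: chi_minus_def X_def)
  then have "-\<infinity> < (SUP N. INF m\<in>{N..}. X m)" by (simp add: liminf_SUP_INF)
  then obtain N where "-\<infinity> < (INF m\<in>{N..}. X m)" by (auto simp: less_SUP_iff)
  then obtain L where L: "ereal L < (INF m\<in>{N..}. X m)" using ereal_dense2 by blast
  have XL: "ereal L \<le> X m" if "N \<le> m" for m
  proof -
    have "(INF m\<in>{N..}. X m) \<le> X m" using that by (intro INF_lower) simp
    then show ?thesis using L by simp
  qed
  define N1 where "N1 = max N 1"
  have Xm: "X m = ereal (1 / real m) * (\<Sum>i<m. fc c ((doubling ^^ Suc i) (bpt c)))" for m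
    unfolding X_def birkhoff_avg_def by (simp only: orbit_shift)
  have bpos: "0 < Dd c ((doubling ^^ Suc j) (bpt c))" for j
  proof (rule ccontr)
    assume "\<not> 0 < Dd c ((doubling ^^ Suc j) (bpt c))"
    then have D0: "Dd c ((doubling ^^ Suc j) (bpt c)) = 0"
      using Dd_nonneg[of c "(doubling ^^ Suc j) (bpt c)"] by linarith
    define m where "m = max N1 (Suc j)"
    have jm: "j \<in> {..<m}" by (simp add: m_def)
    have s: "(\<Sum>i<m. fc c ((doubling ^^ Suc i) (bpt c))) = fc c ((doubling ^^ Suc j) (bpt c)) + (\<Sum>i\<in>{..<m} - {j}. fc c ((doubling ^^ Suc i) (bpt c)))"
      by (rule sum.remove[OF _ jm]) simp
    have r: "(\<Sum>i\<in>{..<m} - {j}. fc c ((doubling ^^ Suc i) (bpt c))) \<le> 0"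
      by (rule sum_nonpos) (simp add: fc_le0)
    have "(\<Sum>i<m. fc c ((doubling ^^ Suc i) (bpt c))) = -\<infinity>"
      unfolding s using D0 r by (cases "(\<Sum>i\<in>{..<m} - {j}. fc c ((doubling ^^ Suc i) (bpt c)))") (auto simp: fc_alt)
    moreover have "0 < 1 / real m" by (simp add: m_def N1_def)
    ultimately have "X m = -\<infinity>" by (simp add: Xm)
    moreover have "N \<le> m" by (simp add: m_def N1_def)
    ultimately show False using XL[of m] by simp
  qed
  have gsum: "(\<Sum>i<m. gg c ((doubling ^^ Suc i) (bpt c))) \<le> - L * real m" if "N \<le> m" "1 \<le> m" for m
  proof -
    have "(\<Sum>i<m. fc c ((doubling ^^ Suc i) (bpt c))) = (\<Sum>i<m. ereal (- gg c ((doubling ^^ Suc i) (bpt c))))"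
    proof (intro sum.cong refl)
      fix i
      have "Dd c ((doubling ^^ Suc i) (bpt c)) \<noteq> 0" using bpos[of i] by linarith
      then show "fc c ((doubling ^^ Suc i) (bpt c)) = ereal (- gg c ((doubling ^^ Suc i) (bpt c)))"
        by (simp only: fc_alt if_False)
    qed
    also have "\<dots> = ereal (- (\<Sum>i<m. gg c ((doubling ^^ Suc i) (bpt c))))"
      by (simp add: sum_ereal sum_negf)
    finally have "X m = ereal (- (\<Sum>i<m. gg c ((doubling ^^ Suc i) (bpt c))) / real m)"
      by (simp add: Xm)
    then have "L \<le> - (\<Sum>i<m. gg c ((doubling ^^ Suc i) (bpt c))) / real m" using XL[OF that(1)] by simp
    then show ?thesis using that(2) by (simp add: field_simps)
  qed
  define A where "A = \<bar>L\<bar> * real N1"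
  have A0: "0 \<le> A" by (simp add: A_def)
  have N11: "1 \<le> real N1" by (simp add: N1_def)
  have gnn: "0 \<le> gg c ((doubling ^^ Suc i) (bpt c))" for i by (rule gg_nonneg[OF bpos])
  have bsum: "(\<Sum>i<n. gg c ((doubling ^^ Suc i) (bpt c))) \<le> A * real n" for n
  proof (cases "N1 \<le> n")
    case True
    then have "(\<Sum>i<n. gg c ((doubling ^^ Suc i) (bpt c))) \<le> - L * real n" by (intro gsum) (auto simp: N1_def)
    also have "\<dots> \<le> \<bar>L\<bar> * real n" by (intro mult_right_mono) auto
    also have "\<dots> \<le> \<bar>L\<bar> * real N1 * real n"
      using mult_left_mono[OF N11, of "\<bar>L\<bar> * real n"] by (simp add: algebra_simps)
    finally show ?thesis by (simp add: A_def)
  next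
    case False
    show ?thesis
    proof (cases "n = 0")
      case True then show ?thesis by simp
    next
      case n0: False
      have "(\<Sum>i<n. gg c ((doubling ^^ Suc i) (bpt c))) \<le> (\<Sum>i<N1. gg c ((doubling ^^ Suc i) (bpt c)))"
        using False gnn by (intro sum_mono2) auto
      also have "\<dots> \<le> - L * real N1" by (intro gsum) (auto simp: N1_def)
      also have "\<dots> \<le> \<bar>L\<bar> * real N1" by (intro mult_right_mono) auto
      also have "\<dots> \<le> \<bar>L\<bar> * real N1 * real n"
        using mult_left_mono[of 1 "real n" "\<bar>L\<bar> * real N1"] n0 by simp
      finally show ?thesis by (simp add: A_def)
    qed
  qed
  note K0g = K0_ge[OF A0 bpos bsum]
  define K where "K = K0 A + 3"
  have Kpos: "0 < K" using K0g(2) by (simp add: K_def)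
  have part1: "(\<exists>n. (doubling ^^ n) x = bpt c) \<or> chi_plus c x > - ereal K" if x: "x \<in> {0..<1}" for x
  proof (cases "\<exists>n. (doubling ^^ n) x = bpt c")
    case True then show ?thesis by blast
  next
    case False
    have allpos: "\<forall>i. 0 < Dd c ((doubling ^^ i) x)"
    proof
      fix i
      show "0 < Dd c ((doubling ^^ i) x)"
      proof (rule ccontr)
        assume "\<not> 0 < Dd c ((doubling ^^ i) x)"
        then have "Dd c ((doubling ^^ i) x) = 0" using Dd_nonneg[of c "(doubling ^^ i) x"] by linarith
        moreover have "0 \<le> (doubling ^^ i) x \<and> (doubling ^^ i) x < 1" using x by (intro funpow_range) auto
        ultimately have "(doubling ^^ i) x = bpt c" using Dd_zero_unit by blast
        then show False using False by blast
      qed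
    qed
    have good: "- ereal (K0 A) \<le> birkhoff_avg c x n" if "(\<Sum>i<n. gg c ((doubling ^^ i) x)) \<le> K0 A * real n" for n
    proof -
      have "(\<Sum>i<n. fc c ((doubling ^^ i) x)) = (\<Sum>i<n. ereal (- gg c ((doubling ^^ i) x)))"
      proof (intro sum.cong refl)
        fix i
        have "Dd c ((doubling ^^ i) x) \<noteq> 0" using allpos by (metis less_irrefl)
        then show "fc c ((doubling ^^ i) x) = ereal (- gg c ((doubling ^^ i) x))"
          by (simp only: fc_alt if_False)
      qed
      also have "\<dots> = ereal (- (\<Sum>i<n. gg c ((doubling ^^ i) x)))"
        by (simp add: sum_ereal sum_negf)
      finally have e: "birkhoff_avg c x n = ereal (- (\<Sum>i<n. gg c ((doubling ^^ i) x)) / real n)"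
        by (simp add: birkhoff_avg_def)
      show ?thesis
      proof (cases "n = 0")
        case True
        have "birkhoff_avg c x n = ereal 0" unfolding e by (simp add: True)
        then show ?thesis using K0g(2) by simp
      next
        case False
        then have "- K0 A \<le> - (\<Sum>i<n. gg c ((doubling ^^ i) x)) / real n" using that by (simp add: field_simps)
        then show ?thesis by (simp add: e)
      qed
    qed
    have "- ereal (K0 A) \<le> (INF N. SUP m\<in>{N..}. birkhoff_avg c x m)"
    proof (rule INF_greatest)
      fix N :: nat
      obtain n where n: "N \<le> n" "(\<Sum>i<n. gg c ((doubling ^^ i) x)) \<le> K0 A * real n"
        using untrunc[OF A0 bpos bsum allpos] by blast
      show "- ereal (K0 A) \<le> (SUP m\<in>{N..}. birkhoff_avg c x m)"
        using n by (intro SUP_upper2[of n] good) auto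
    qed
    then have "- ereal (K0 A) \<le> chi_plus c x" by (simp add: chi_plus_def limsup_INF_SUP)
    moreover have "- ereal K < - ereal (K0 A)" by (simp add: K_def)
    ultimately have "- ereal K < chi_plus c x" by (metis less_le_trans)
    then show ?thesis by blast
  qed
  have part2: "- ereal K \<le> alpha c"
    unfolding alpha_def
  proof (rule INF_greatest)
    fix \<mu> assume inv: "\<mu> \<in> invariant_measures"
    have "(\<integral>\<^sup>+y. e2ennreal (- fc c y) \<partial>\<mu>) \<le> ennreal K"
      using int_bound[OF A0 bpos bsum inv] by (simp add: K_def)
    then have "enn2ereal (\<integral>\<^sup>+y. e2ennreal (- fc c y) \<partial>\<mu>) \<le> enn2ereal (ennreal K)"
      by (simp add: less_eq_ennreal.rep_eq)
    then have "enn2ereal (\<integral>\<^sup>+y. e2ennreal (- fc c y) \<partial>\<mu>) \<le> ereal K" using Kpos by simp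
    then have "- ereal K \<le> - enn2ereal (\<integral>\<^sup>+y. e2ennreal (- fc c y) \<partial>\<mu>)"
      by (simp only: ereal_minus_le_minus)
    then show "- ereal K \<le> int_fc c \<mu>" by (simp only: int_fc_def)
  qed
  show ?thesis using Kpos part1 part2 by blast
qed

end
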